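(* Let $n\ge2$ be an integer. (a) $\mathrm{Sym}^n\mathbb{R}[e_1]\cap \mathrm{Sym}^n\mathbb{H}\cdot\triangle^{(n)}_\mathbb{H}=\{0\}$. (b) $\mathrm{Sym}^n\mathbb{H}\cap \mathrm{Sym}^n\mathbb{O}\cdot\triangle^{(n)}_\mathbb{O}=\{0\}$.
   Context: $\mathbb{O}$ is the Cayley octonion algebra over $\mathbb{R}$ with basis $e_0=1,e_1,\dots,e_7$; $1,e_1,e_2,e_3$ span the quaternion subalgebra $\mathbb{H}$ ($e_i^2=-1$, $e_1e_2=-e_2e_1=e_3$, $e_2e_3=-e_3e_2=e_1$, $e_3e_1=-e_1e_3=e_2$), $\mathbb{O}=\mathbb{H}\oplus\mathbb{H}e_4$ is the Cayley–Dickson double with $e_4^2=-1$, $e_{i+4}=e_ie_4$ ($i=1,2,3$), $(x+ye_4)(z+we_4)=(xz-\bar wy)+(wx+y\bar z)e_4$; $\mathbb{R}[e_1]$ is the subalgebra spanned by $1,e_1$. For $\mathcal A\in\{\mathbb{R}[e_1],\mathbb{H},\mathbb{O}\}$, $\mathcal A^{\otimes n}$ is the $n$-fold tensor power over $\mathbb{R}$ with componentwise multiplication, $\mathfrak S_n$ acts by permuting factors, $x^\vee=\frac1{n!}\sum_{\sigma\in\mathfrak S_n}\sigma(x)$, and $\mathrm{Sym}^n\mathcal A$ is the subalgebra of fixed tensors; $\mathrm{Sym}^n\mathbb{R}[e_1]\subset\mathrm{Sym}^n\mathbb{H}\subset\mathrm{Sym}^n\mathbb{O}$. For $\mathcal C\in\{\mathbb{H},\mathbb{O}\}$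 of dimension $d$, $\triangle_{\mathcal C}=\frac1d\sum_{i=0}^{d-1}e_i\otimes e_i$ and $\triangle^{(n)}_{\mathcal C}=(\triangle_{\mathcal C}\otimes1^{\otimes(n-2)})^\vee$; $\mathrm{Sym}^n\mathcal C\cdot\triangle^{(n)}_{\mathcal C}=\{r\triangle^{(n)}_{\mathcal C}: r\in\mathrm{Sym}^n\mathcal C\}$. *)

theory Defs
  imports Complex_Main "HOL-Combinatorics.Permutations"
begin

text \<open>Elements of the algebras are coefficient vectors on the standard basis
  e_0 = 1, e_1, ..., e_{d-1}: a function nat => real, meaningful on indices < d.\<close>

definition unitv :: "nat \<Rightarrow> nat \<Rightarrow> real" where
  "unitv i = (\<lambda>j. if j = i then 1 else 0)"

text \<open>Hamilton quaternion product (basis 1, e1, e2, e3 with e1e2 = e3, e2e3 = e1, e3e1 = e2).\<close>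
definition qmul :: "(nat \<Rightarrow> real) \<Rightarrow> (nat \<Rightarrow> real) \<Rightarrow> nat \<Rightarrow> real" where
  "qmul p q = (\<lambda>k.
     if k = 0 then p 0 * q 0 - p 1 * q 1 - p 2 * q 2 - p 3 * q 3
     else if k = 1 then p 0 * q 1 + p 1 * q 0 + p 2 * q 3 - p 3 * q 2
     else if k = 2 then p 0 * q 2 - p 1 * q 3 + p 2 * q 0 + p 3 * q 1
     else if k = 3 then p 0 * q 3 + p 1 * q 2 - p 2 * q 1 + p 3 * q 0
     else 0)"

definition qconj :: "(nat \<Rightarrow> real) \<Rightarrow> nat \<Rightarrow> real" where
  "qconj p = (\<lambda>k. if k = 0 then p 0 else if k < 4 then - p k else 0)"

definition qadd :: "(nat \<Rightarrow> real) \<Rightarrow> (nat \<Rightarrow> real) \<Rightarrow> nat \<Rightarrow> real" where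
  "qadd p q = (\<lambda>k. p k + q k)"

text \<open>Octonion x + y e4 (x, y quaternions, e_{i+4} = e_i e_4) has coefficients
  x_0..x_3 at 0..3 and y_0..y_3 at 4..7.  Cayley--Dickson product
  (x + y e4)(z + w e4) = (xz - conj(w) y) + (w x + y conj(z)) e4.\<close>
definition ofst :: "(nat \<Rightarrow> real) \<Rightarrow> nat \<Rightarrow> real" where
  "ofst a = (\<lambda>k. if k < 4 then a k else 0)"

definition osnd :: "(nat \<Rightarrow> real) \<Rightarrow> nat \<Rightarrow> real" where
  "osnd a = (\<lambda>k. if k < 4 then a (k + 4) else 0)"

definition omul :: "(nat \<Rightarrow> real) \<Rightarrow> (nat \<Rightarrow> real) \<Rightarrow> nat \<Rightarrow> real" where
  "omul a b = (let x = ofst a; y = osnd a; z = ofst b; w = osnd b;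
                   u = (\<lambda>k. qmul x z k - qmul (qconj w) y k);
                   v = (\<lambda>k. qmul w x k + qmul y (qconj z) k)
               in (\<lambda>k. if k < 4 then u k else if k < 8 then v (k - 4) else 0))"

definition bmulH :: "nat \<Rightarrow> nat \<Rightarrow> nat \<Rightarrow> real" where
  "bmulH i j = qmul (unitv i) (unitv j)"

definition bmulO :: "nat \<Rightarrow> nat \<Rightarrow> nat \<Rightarrow> real" where
  "bmulO i j = omul (unitv i) (unitv j)"

text \<open>n-fold tensor powers: an element of A^{\<otimes>n} (dim A = d) is a coefficient
  function on basis words w = [w_0,...,w_{n-1}] with w_k < d (basis tensor
  e_{w_0} \<otimes> ... \<otimes> e_{w_{n-1}}), zero on all other lists.\<close>
definition words :: "nat \<Rightarrow> nat \<Rightarrow> nat list set" where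
  "words n d = {w. length w = n \<and> (\<forall>a\<in>set w. a < d)}"

definition is_tensor :: "nat \<Rightarrow> nat \<Rightarrow> (nat list \<Rightarrow> real) \<Rightarrow> bool" where
  "is_tensor n d x \<longleftrightarrow> (\<forall>w. w \<notin> words n d \<longrightarrow> x w = 0)"

text \<open>Componentwise multiplication in A^{\<otimes>n}, extended bilinearly.\<close>
definition tmul :: "(nat \<Rightarrow> nat \<Rightarrow> nat \<Rightarrow> real) \<Rightarrow> nat \<Rightarrow> nat
                    \<Rightarrow> (nat list \<Rightarrow> real) \<Rightarrow> (nat list \<Rightarrow> real) \<Rightarrow> nat list \<Rightarrow> real" where
  "tmul bm n d x y = (\<lambda>u. if u \<in> words n d then
      (\<Sum>w\<in>words n d. \<Sum>v\<in>words n d. x w * y v * (\<Prod>k<n. bm (w ! k) (v ! k) (u ! k)))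
      else 0)"

definition permw :: "nat \<Rightarrow> (nat \<Rightarrow> nat) \<Rightarrow> nat list \<Rightarrow> nat list" where
  "permw n \<sigma> w = map (\<lambda>k. w ! \<sigma> k) [0..<n]"

definition Sym :: "nat \<Rightarrow> nat \<Rightarrow> (nat list \<Rightarrow> real) set" where
  "Sym n d = {x. is_tensor n d x \<and>
     (\<forall>\<sigma> w. \<sigma> permutes {..<n} \<longrightarrow> w \<in> words n d \<longrightarrow> x (permw n \<sigma> w) = x w)}"

definition symz :: "nat \<Rightarrow> (nat list \<Rightarrow> real) \<Rightarrow> nat list \<Rightarrow> real" where
  "symz n x = (\<lambda>w. (1 / fact n) * (\<Sum>\<sigma>\<in>{\<sigma>. \<sigma> permutes {..<n}}. x (permw n \<sigma> w)))"

text \<open>\<triangle>_C \<otimes> 1^{\<otimes>(n-2)} with \<triangle>_C = (1/d) \<Sum>_i e_i \<otimes> e_i, and \<triangle>^{(n)}_C.\<close>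
definition delta0 :: "nat \<Rightarrow> nat \<Rightarrow> nat list \<Rightarrow> real" where
  "delta0 n d = (\<lambda>w. if w \<in> words n d \<and> w ! 0 = w ! 1 \<and> (\<forall>k\<in>{2..<n}. w ! k = 0)
                     then 1 / real d else 0)"

definition delta :: "nat \<Rightarrow> nat \<Rightarrow> nat list \<Rightarrow> real" where
  "delta n d = symz n (delta0 n d)"

end

theory Submission
  imports Defs
begin


lemma length_permw[simp]: "length (permw n \<sigma> w) = n" by (simp add: permw_def)

lemma permw_nth: "k < n \<Longrightarrow> permw n \<sigma> w ! k = w ! \<sigma> k"
  by (simp add: permw_def)

lemma permw_pl: "length w = n \<Longrightarrow> permw n \<sigma> w = permute_list \<sigma> w"
  by (simp add: permw_def permute_list_def)

lemma words_iff: "w \<in> words n d \<longleftrightarrow> length w = n \<and> (\<forall>k<n. w ! k < d)"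
  by (auto simp: words_def all_set_conv_all_nth)

lemma finite_words: "finite (words n d)"
proof -
  have "words n d = {w. set w \<subseteq> {..<d} \<and> length w = n}" by (auto simp: words_def)
  then show ?thesis using finite_lists_length_eq[of "{..<d}" n] by simp
qed

lemma permw_words:
  assumes s: "\<sigma> permutes {..<n}" and w: "w \<in> words n d" shows "permw n \<sigma> w \<in> words n d"
proof -
  have "permw n \<sigma> w ! k < d" if "k < n" for k
  proof -
    have "\<sigma> k < n" using permutes_in_image[OF s, of k] that by simp
    then show ?thesis using w that unfolding words_iff by (simp add: permw_nth)
  qed
  then show ?thesis unfolding words_iff by simp
qed

lemma permw_comp:
  assumes s: "\<sigma> permutes {..<n}"
  shows "permw n \<sigma> (permw n \<tau> w) = permw n (\<tau> \<circ> \<sigma>) w"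
proof (rule nth_equalityI)
  fix k assume "k < length (permw n \<sigma> (permw n \<tau> w))"
  then have k: "k < n" by simp
  have "\<sigma> k < n" using permutes_in_image[OF s, of k] k by simp
  then show "permw n \<sigma> (permw n \<tau> w) ! k = permw n (\<tau> \<circ> \<sigma>) w ! k"
    using k by (simp add: permw_nth)
qed simp

lemma permw_id: "length w = n \<Longrightarrow> permw n id w = w"
  by (auto intro!: nth_equalityI simp: permw_nth)

lemma permw_bij:
  assumes s: "\<sigma> permutes {..<n}" shows "bij_betw (permw n \<sigma>) (words n d) (words n d)"
proof (rule bij_betwI[where g = "permw n (inv \<sigma>)"])
  have si: "inv \<sigma> permutes {..<n}" using s by (rule permutes_inv)
  show "permw n \<sigma> \<in> words n d \<rightarrow> words n d" using permw_words[OF s] by auto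
  show "permw n (inv \<sigma>) \<in> words n d \<rightarrow> words n d" using permw_words[OF si] by auto
  fix w assume w: "w \<in> words n d"
  then have l: "length w = n" by (simp add: words_def)
  show "permw n (inv \<sigma>) (permw n \<sigma> w) = w"
    using permw_comp[OF si] permutes_inv_o[OF s] permw_id[OF l] by simp
  show "permw n \<sigma> (permw n (inv \<sigma>) w) = w"
    using permw_comp[OF s] permutes_inv_o[OF s] permw_id[OF l] by simp
qed

lemma tmul_permw:
  assumes r: "r \<in> Sym n d" and s: "\<sigma> permutes {..<n}" and u: "u \<in> words n d"
  shows "tmul bm n d r (\<lambda>v. y (permw n \<sigma> v)) u = tmul bm n d r y (permw n \<sigma> u)"
proof -
  let ?p = "permw n \<sigma>"
  define G where "G = (\<lambda>w v. r w * y v * (\<Prod>k<n. bm (w ! k) (v ! k) (?p u ! k)))"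
  have eq: "r w * y (?p v) * (\<Prod>k<n. bm (w ! k) (v ! k) (u ! k)) = G (?p w) (?p v)"
    if "w \<in> words n d" "v \<in> words n d" for w v
  proof -
    have "r (?p w) = r w" using r s that by (simp add: Sym_def)
    moreover have "(\<Prod>k<n. bm (?p w ! k) (?p v ! k) (?p u ! k)) = (\<Prod>k<n. bm (w ! \<sigma> k) (v ! \<sigma> k) (u ! \<sigma> k))"
      by (simp add: permw_nth)
    moreover have "\<dots> = (\<Prod>k<n. bm (w ! k) (v ! k) (u ! k))"
      using prod.reindex_bij_betw[OF permutes_imp_bij[OF s], of "\<lambda>k. bm (w!k) (v!k) (u!k)"] by simp
    ultimately show ?thesis by (simp add: G_def)
  qed
  have "tmul bm n d r (\<lambda>v. y (?p v)) u = (\<Sum>w\<in>words n d. \<Sum>v\<in>words n d. G (?p w) (?p v))"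
    using u by (simp add: tmul_def eq cong: sum.cong)
  also have "\<dots> = (\<Sum>w\<in>words n d. \<Sum>v\<in>words n d. G (?p w) v)"
    by (rule sum.cong[OF refl], rule sum.reindex_bij_betw[OF permw_bij[OF s]])
  also have "\<dots> = (\<Sum>w\<in>words n d. \<Sum>v\<in>words n d. G w v)"
    by (rule sum.reindex_bij_betw[OF permw_bij[OF s]])
  also have "\<dots> = tmul bm n d r y (?p u)"
    using permw_words[OF s u] by (simp add: tmul_def G_def)
  finally show ?thesis .
qed

lemma tmul_sum:
  assumes "u \<in> words n d"
  shows "tmul bm n d r (\<lambda>v. c * (\<Sum>\<sigma>\<in>S. Y \<sigma> v)) u = c * (\<Sum>\<sigma>\<in>S. tmul bm n d r (Y \<sigma>) u)"
proof -
  have "tmul bm n d r (\<lambda>v. c * (\<Sum>\<sigma>\<in>S. Y \<sigma> v)) u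
     = (\<Sum>w\<in>words n d. \<Sum>v\<in>words n d. \<Sum>\<sigma>\<in>S. c * (r w * Y \<sigma> v * (\<Prod>k<n. bm (w ! k) (v ! k) (u ! k))))"
    using assms by (simp add: tmul_def sum_distrib_left sum_distrib_right mult_ac)
  also have "\<dots> = (\<Sum>w\<in>words n d. \<Sum>\<sigma>\<in>S. \<Sum>v\<in>words n d. c * (r w * Y \<sigma> v * (\<Prod>k<n. bm (w ! k) (v ! k) (u ! k))))"
    by (rule sum.cong[OF refl], rule sum.swap)
  also have "\<dots> = (\<Sum>\<sigma>\<in>S. \<Sum>w\<in>words n d. \<Sum>v\<in>words n d. c * (r w * Y \<sigma> v * (\<Prod>k<n. bm (w ! k) (v ! k) (u ! k))))"
    by (rule sum.swap)
  also have "\<dots> = c * (\<Sum>\<sigma>\<in>S. tmul bm n d r (Y \<sigma>) u)"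
    using assms by (simp add: tmul_def sum_distrib_left)
  finally show ?thesis .
qed

lemma tmul_symz:
  assumes r: "r \<in> Sym n d" and u: "u \<in> words n d"
  shows "tmul bm n d r (symz n y) u
     = (1 / fact n) * (\<Sum>\<sigma>\<in>{\<sigma>. \<sigma> permutes {..<n}}. tmul bm n d r y (permw n \<sigma> u))"
proof -
  have "tmul bm n d r (symz n y) u
     = (1 / fact n) * (\<Sum>\<sigma>\<in>{\<sigma>. \<sigma> permutes {..<n}}. tmul bm n d r (\<lambda>v. y (permw n \<sigma> v)) u)"
    unfolding symz_def by (rule tmul_sum[OF u])
  also have "\<dots> = (1 / fact n) * (\<Sum>\<sigma>\<in>{\<sigma>. \<sigma> permutes {..<n}}. tmul bm n d r y (permw n \<sigma> u))"
    using tmul_permw[OF r _ u] by simp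
  finally show ?thesis .
qed



definition sfun :: "nat \<Rightarrow> (nat list \<Rightarrow> real) \<Rightarrow> nat list \<Rightarrow> real" where
  "sfun d r N = (\<Sum>a<d. r (a # a # N))"

lemma list2: "2 \<le> length w \<Longrightarrow> w = w!0 # w!1 # drop 2 w"
  by (cases w; cases "tl w") auto

lemma three_cases: "(k::nat) = 0 \<or> k = 1 \<or> 2 \<le> k" by arith

lemma g_nth: "2 \<le> m \<Longrightarrow> (a # b # xs) ! m = xs ! (m - 2)"
  by (cases m; cases "m - 1") auto

lemma delta0_sum:
  assumes n: "2 \<le> n"
  shows "(\<Sum>v\<in>words n d. delta0 n d v * F v) = (1 / real d) * (\<Sum>k<d. F (k # k # replicate (n-2) 0))"
proof -
  define g where "g = (\<lambda>k::nat. k # k # replicate (n-2) (0::nat))"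
  have gw: "g k \<in> words n d" if "k < d" for k
    using n that by (auto simp: g_def words_def)
  have gn: "g k ! m = 0" if "2 \<le> m" "m < n" for k m
    using that by (simp add: g_def g_nth)
  have sub: "g ` {..<d} \<subseteq> words n d" using gw by auto
  have z: "\<forall>v\<in>words n d - g ` {..<d}. delta0 n d v * F v = 0"
  proof
    fix v assume v: "v \<in> words n d - g ` {..<d}"
    show "delta0 n d v * F v = 0"
    proof (rule ccontr)
      assume "delta0 n d v * F v \<noteq> 0"
      then have c: "v ! 0 = v ! 1" "\<forall>k\<in>{2..<n}. v ! k = 0" using v
        by (auto simp: delta0_def split: if_splits)
      have l: "length v = n" and v0: "v ! 0 < d" using v n by (auto simp: words_iff)
      have "v = g (v ! 0)"
      proof (rule nth_equalityI)
        show "length v = length (g (v!0))" using l n by (simp add: g_def)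
        fix k assume k: "k < length v"
        show "v ! k = g (v!0) ! k"
          using three_cases[of k]
        proof (elim disjE)
          assume "2 \<le> k" then show ?thesis using gn[of k] c k l by auto
        qed (use c in \<open>auto simp: g_def\<close>)
      qed
      then show False using v v0 by auto
    qed
  qed
  have "(\<Sum>v\<in>words n d. delta0 n d v * F v) = (\<Sum>v\<in>g ` {..<d}. delta0 n d v * F v)"
    using sum.mono_neutral_right[OF finite_words sub z] by simp
  also have "\<dots> = (\<Sum>k<d. delta0 n d (g k) * F (g k))"
    by (rule sum.reindex_cong[where l = g]) (auto simp: inj_on_def g_def)
  also have "\<dots> = (\<Sum>k<d. (1 / real d) * F (g k))"
  proof (rule sum.cong[OF refl])
    fix k assume "k \<in> {..<d}"
    then have "delta0 n d (g k) = 1 / real d" using gw[of k] gn[of _ k]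
      by (auto simp: delta0_def g_def)
    then show "delta0 n d (g k) * F (g k) = (1 / real d) * F (g k)" by simp
  qed
  finally show ?thesis by (simp add: sum_distrib_left g_def)
qed

lemma prod_indicator:
  assumes "finite A"
  shows "(\<Prod>m\<in>A. (if P m then 1 else 0::real)) = (if \<forall>m\<in>A. P m then 1 else 0)"
  using assms by (induction A rule: finite_induct) auto

lemma prod_split:
  assumes n: "2 \<le> n" and H1: "\<forall>a<d. \<forall>p<d. bm a 0 p = (if a = p then 1 else (0::real))"
   and w: "w \<in> words n d" and u: "u \<in> words n d"
  shows "(\<Prod>m<n. bm (w!m) ((k # k # replicate (n-2) 0) ! m) (u!m))
       = bm (w!0) k (u!0) * bm (w!1) k (u!1) * (if \<forall>m\<in>{2..<n}. w!m = u!m then 1 else 0)"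
proof -
  have U: "{..<n} = {0,1} \<union> {2..<n}" using n by auto
  have split: "(\<Prod>m<n. F m) = F 0 * F 1 * (\<Prod>m\<in>{2..<n}. F m)" for F :: "nat \<Rightarrow> real"
    unfolding U by (subst prod.union_disjoint) auto
  have "(\<Prod>m\<in>{2..<n}. bm (w!m) ((k # k # replicate (n-2) 0) ! m) (u!m))
      = (\<Prod>m\<in>{2..<n}. (if w!m = u!m then 1 else 0))"
  proof (rule prod.cong[OF refl])
    fix m assume m: "m \<in> {2..<n}"
    then have "w!m < d" "u!m < d" using w u by (auto simp: words_iff)
    moreover have "(k # k # replicate (n-2) 0) ! m = 0"
    proof -
      have "m - 2 < n - 2" using m by auto
      then show ?thesis using m by (simp add: g_nth)
    qed
    ultimately show "bm (w!m) ((k # k # replicate (n-2) 0) ! m) (u!m) = (if w!m = u!m then 1 else 0)"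
      using m H1 by (simp add: g_nth)
  qed
  also have "\<dots> = (if \<forall>m\<in>{2..<n}. w!m = u!m then 1 else 0)" by (rule prod_indicator) simp
  finally show ?thesis by (simp add: split)
qed

lemma words_split_sum:
  assumes n: "2 \<le> n" and u: "u \<in> words n d"
  shows "(\<Sum>w\<in>words n d. (if \<forall>m\<in>{2..<n}. w!m = u!m then H w else (0::real)))
       = (\<Sum>a<d. \<Sum>b<d. H (a#b#drop 2 u))"
proof -
  define T where "T = {w\<in>words n d. \<forall>m\<in>{2..<n}. w!m = u!m}"
  define h where "h = (\<lambda>(a::nat,b::nat). a#b#drop 2 u)"
  have 1: "(\<Sum>w\<in>words n d. (if \<forall>m\<in>{2..<n}. w!m = u!m then H w else 0)) = (\<Sum>w\<in>T. H w)"
    unfolding T_def by (simp add: sum.inter_filter[OF finite_words])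
  have lu: "length u = n" using u by (simp add: words_def)
  have T: "T = h ` ({..<d}\<times>{..<d})"
  proof
    show "T \<subseteq> h ` ({..<d}\<times>{..<d})"
    proof
      fix w assume wT: "w \<in> T"
      then have lw: "length w = n" and wd: "\<forall>k<n. w!k < d" and e: "\<forall>m\<in>{2..<n}. w!m = u!m"
        by (auto simp: T_def words_iff)
      have "drop 2 w = drop 2 u"
        by (rule nth_equalityI) (use lw lu e in auto)
      then have "w = h (w!0, w!1)" using list2[of w] lw n by (simp add: h_def)
      moreover have "w!0 < d" "w!1 < d" using wd n by auto
      ultimately show "w \<in> h ` ({..<d}\<times>{..<d})" by auto
    qed
  next
    show "h ` ({..<d}\<times>{..<d}) \<subseteq> T"
    proof
      fix x assume "x \<in> h ` ({..<d}\<times>{..<d})"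
      then obtain a b where ab: "a < d" "b < d" "x = a#b#drop 2 u" by (auto simp: h_def)
      have "set (drop 2 u) \<subseteq> {..<d}" using u set_drop_subset[of 2 u] by (auto simp: words_def)
      then have "x \<in> words n d" using ab lu n by (auto simp: words_def)
      moreover have "\<forall>m\<in>{2..<n}. x!m = u!m"
      proof
        fix m assume m: "m \<in> {2..<n}"
        then have "Suc (Suc (m - Suc (Suc 0))) = m" by auto
        then show "x!m = u!m" using ab lu m by (simp add: g_nth)
      qed
      ultimately show "x \<in> T" by (simp add: T_def)
    qed
  qed
  have inj: "inj_on h ({..<d}\<times>{..<d})" by (auto simp: h_def inj_on_def)
  have "(\<Sum>w\<in>T. H w) = (\<Sum>p\<in>{..<d}\<times>{..<d}. H (h p))"
    unfolding T using sum.reindex[OF inj, of H] by simp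
  also have "\<dots> = (\<Sum>a<d. \<Sum>b<d. H (a#b#drop 2 u))"
    by (simp add: sum.cartesian_product h_def case_prod_unfold)
  finally show ?thesis using 1 by simp
qed

lemma sym_contract:
  fixes R K :: "nat \<Rightarrow> nat \<Rightarrow> real"
  assumes R: "\<forall>a<d. \<forall>b<d. R a b = R b a"
    and K: "\<forall>a<d. \<forall>b<d. K a b + K b a = (if a = b then 2 * c else 0)"
  shows "(\<Sum>a<d. \<Sum>b<d. R a b * K a b) = c * (\<Sum>a<d. R a a)"
proof -
  let ?S = "\<Sum>a<d. \<Sum>b<d. R a b * K a b"
  have "?S = (\<Sum>a<d. \<Sum>b<d. R b a * K b a)" by (rule sum.swap)
  also have "\<dots> = (\<Sum>a<d. \<Sum>b<d. R a b * K b a)" using R by (intro sum.cong) auto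
  finally have "2 * ?S = (\<Sum>a<d. \<Sum>b<d. R a b * K a b) + (\<Sum>a<d. \<Sum>b<d. R a b * K b a)" by simp
  also have "\<dots> = (\<Sum>a<d. \<Sum>b<d. R a b * (K a b + K b a))"
    by (simp add: sum.distrib distrib_left)
  also have "\<dots> = (\<Sum>a<d. \<Sum>b<d. if a = b then R a b * (2 * c) else 0)"
    using K by (intro sum.cong) auto
  also have "\<dots> = (\<Sum>a<d. R a a * (2 * c))" by simp
  also have "\<dots> = 2 * (c * (\<Sum>a<d. R a a))" by (simp add: sum_distrib_left sum_distrib_right mult_ac)
  finally show ?thesis by simp
qed

lemma r_swap:
  assumes r: "r \<in> Sym n d" and n: "2 \<le> n" and ab: "a < d" "b < d" and N: "N \<in> words (n-2) d"
  shows "r (a#b#N) = r (b#a#N)"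
proof -
  have s: "transpose 0 1 permutes {..<n}" using n by (intro permutes_swap_id) auto
  have lN: "length N = n - 2" using N by (simp add: words_def)
  have w: "b#a#N \<in> words n d" using N n ab by (auto simp: words_def)
  have "permw n (transpose 0 1) (b#a#N) = a#b#N"
  proof (rule nth_equalityI)
    show "length (permw n (transpose 0 1) (b # a # N)) = length (a # b # N)" using lN n by simp
    fix k assume "k < length (permw n (transpose 0 1) (b # a # N))"
    then have k: "k < n" by simp
    show "permw n (transpose 0 1) (b # a # N) ! k = (a # b # N) ! k"
      using three_cases[of k] k by (auto simp: permw_nth g_nth transpose_def)
  qed
  moreover have "r (permw n (transpose 0 1) (b#a#N)) = r (b#a#N)"
    using r s w unfolding Sym_def by blast
  ultimately show ?thesis by simp
qed



lemma f_formula: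
  assumes n: "2 \<le> n"
    and H1: "\<forall>a<d. \<forall>p<d. bm a 0 p = (if a = p then 1 else (0::real))"
    and H2: "\<forall>a<d. \<forall>c<d. \<forall>p<d. \<forall>q<d. (\<Sum>k<d. bm a k p * bm c k q) + (\<Sum>k<d. bm c k p * bm a k q) = (if a = c \<and> p = q then 2 else 0)"
    and r: "r \<in> Sym n d" and u: "u \<in> words n d"
  shows "tmul bm n d r (delta0 n d) u = (if u!0 = u!1 then sfun d r (drop 2 u) / real d else 0)"
proof -
  define p q u' where "p = u!0" and "q = u!1" and "u' = drop 2 u"
  define K where "K = (\<lambda>a b. \<Sum>k<d. bm a k p * bm b k q)"
  let ?g = "\<lambda>k. k # k # replicate (n-2) (0::nat)"
  let ?P = "\<lambda>w v. \<Prod>m<n. bm (w!m) (v!m) (u!m)"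
  have pd: "p < d" "q < d" using u n by (auto simp: p_def q_def words_iff)
  have u'w: "u' \<in> words (n-2) d" using u set_drop_subset[of 2 u] by (auto simp: u'_def words_def)
  have "tmul bm n d r (delta0 n d) u = (\<Sum>w\<in>words n d. r w * (\<Sum>v\<in>words n d. delta0 n d v * ?P w v))"
    using u by (simp add: tmul_def sum_distrib_left mult_ac)
  also have "\<dots> = (\<Sum>w\<in>words n d. r w * ((1 / real d) * (\<Sum>k<d. ?P w (?g k))))"
    by (simp only: delta0_sum[OF n])
  also have "\<dots> = (\<Sum>w\<in>words n d. (1 / real d) * (if \<forall>m\<in>{2..<n}. w!m = u!m then r w * K (w!0) (w!1) else 0))"
  proof (rule sum.cong[OF refl])
    fix w assume w: "w \<in> words n d"
    have eq: "(\<Sum>k<d. ?P w (?g k)) = (\<Sum>k<d. bm (w!0) k p * bm (w!1) k q * (if \<forall>m\<in>{2..<n}. w!m = u!m then 1 else 0))"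
      by (simp add: prod_split[where bm=bm and d=d, OF n H1 w u] p_def q_def)
    show "r w * ((1 / real d) * (\<Sum>k<d. ?P w (?g k))) = (1 / real d) * (if \<forall>m\<in>{2..<n}. w!m = u!m then r w * K (w!0) (w!1) else 0)"
    proof (cases "\<forall>m\<in>{2..<n}. w!m = u!m")
      case True then show ?thesis using eq unfolding if_P[OF True] by (simp add: K_def sum_distrib_left mult_ac)
    next
      case False then show ?thesis using eq unfolding if_not_P[OF False] by simp
    qed
  qed
  also have "\<dots> = (1 / real d) * (\<Sum>w\<in>words n d. (if \<forall>m\<in>{2..<n}. w!m = u!m then r w * K (w!0) (w!1) else 0))"
    by (simp add: sum_distrib_left)
  also have "\<dots> = (1 / real d) * (\<Sum>a<d. \<Sum>b<d. r (a#b#u') * K a b)"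
    using words_split_sum[OF n u, of "\<lambda>w. r w * K (w!0) (w!1)"] by (simp add: u'_def)
  also have "\<dots> = (1 / real d) * ((if p = q then 1 else 0) * (\<Sum>a<d. r (a#a#u')))"
  proof -
    have R: "\<forall>a<d. \<forall>b<d. r (a#b#u') = r (b#a#u')" using r_swap[OF r n _ _ u'w] by blast
    have KK: "\<forall>a<d. \<forall>b<d. K a b + K b a = (if a = b then 2 * (if p = q then 1 else 0) else 0)"
      using H2 pd by (auto simp: K_def)
    show ?thesis using sym_contract[OF R KK] by simp
  qed
  finally show ?thesis by (simp add: sfun_def p_def q_def u'_def)
qed

lemma mset_dec: "2 \<le> length v \<Longrightarrow> mset v = mset (drop 2 v) + {#v!0, v!1#}"
  by (subst list2[of v]) auto

theorem main_gen:
  assumes n: "2 \<le> n" and bd: "b < d"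
    and H1: "\<forall>a<d. \<forall>p<d. bm a 0 p = (if a = p then 1 else (0::real))"
    and H2: "\<forall>a<d. \<forall>c<d. \<forall>p<d. \<forall>q<d. (\<Sum>k<d. bm a k p * bm c k q) + (\<Sum>k<d. bm c k p * bm a k q) = (if a = c \<and> p = q then 2 else 0)"
  shows "Sym n b \<inter> {tmul bm n d r (delta n d) | r. r \<in> Sym n d} = {(\<lambda>_. 0)}"
proof
  have z1: "(\<lambda>_. 0) \<in> Sym n b" by (simp add: Sym_def is_tensor_def)
  have z2: "(\<lambda>_. 0) \<in> Sym n d" by (simp add: Sym_def is_tensor_def)
  have z3: "tmul bm n d (\<lambda>_. 0) (delta n d) = (\<lambda>_. 0)" by (simp add: tmul_def fun_eq_iff)
  show "{(\<lambda>_. 0)} \<subseteq> Sym n b \<inter> {tmul bm n d r (delta n d) | r. r \<in> Sym n d}"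
    using z1 z2 z3 by force
next
  show "Sym n b \<inter> {tmul bm n d r (delta n d) | r. r \<in> Sym n d} \<subseteq> {(\<lambda>_. 0)}"
  proof
    fix x assume "x \<in> Sym n b \<inter> {tmul bm n d r (delta n d) | r. r \<in> Sym n d}"
    then obtain r where r: "r \<in> Sym n d" and x: "x = tmul bm n d r (delta n d)" and xs: "x \<in> Sym n b"
      by auto
    define f where "f = tmul bm n d r (delta0 n d)"
    define PS where "PS = {\<sigma>. \<sigma> permutes {..<n}}"
    have d0: "0 < d" using bd by simp
    have xu: "x u = (1 / fact n) * (\<Sum>\<sigma>\<in>PS. f (permw n \<sigma> u))" if "u \<in> words n d" for u
      using tmul_symz[OF r that] x by (simp add: delta_def f_def PS_def)
    have ff: "f u = (if u!0 = u!1 then sfun d r (drop 2 u) / real d else 0)" if "u \<in> words n d" for u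
      unfolding f_def by (rule f_formula[OF n H1 H2 r that])
    have dropW: "drop 2 u \<in> words (n-2) d" if "u \<in> words n d" for u
      using that set_drop_subset[of 2 u] by (auto simp: words_def)
    have ssym: "sfun d r N1 = sfun d r N2"
      if N: "N1 \<in> words (n-2) d" "N2 \<in> words (n-2) d" "mset N1 = mset N2" for N1 N2
    proof -
      have "r (a#a#N1) = r (a#a#N2)" if a: "a < d" for a
      proof -
        have "mset (a#a#N1) = mset (a#a#N2)" using N by simp
        from mset_eq_permutation[OF this] obtain \<sigma> where
          \<sigma>: "\<sigma> permutes {..<length (a#a#N2)}" "permute_list \<sigma> (a#a#N2) = a#a#N1" by blast
        have l2: "length (a#a#N2) = n" using N n by (simp add: words_def)
        have w2: "a#a#N2 \<in> words n d" using N a l2 by (auto simp: words_def)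
        have "permw n \<sigma> (a#a#N2) = a#a#N1" using \<sigma> l2 permw_pl[OF l2] by simp
        moreover have "r (permw n \<sigma> (a#a#N2)) = r (a#a#N2)"
          using r \<sigma>(1) w2 l2 unfolding Sym_def by auto
        ultimately show ?thesis by simp
      qed
      then show ?thesis by (simp add: sfun_def)
    qed
    have s0: "sfun d r N = 0" if "N \<in> words (n-2) d" for N
      using that
    proof (induction "n - 2 - count (mset N) b" arbitrary: N rule: less_induct)
      case less
      define u where "u = b#b#N"
      have lN: "length N = n-2" using less.prems by (simp add: words_def)
      have lu: "length u = n" using lN n by (simp add: u_def)
      have uW: "u \<in> words n d" using less.prems bd n by (auto simp: u_def words_def)
      have unb: "u \<notin> words n b" by (auto simp: u_def words_def)
      have xu0: "x u = 0" using xs unb by (simp add: Sym_def is_tensor_def)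
      define C where "C = (\<lambda>\<sigma>. permw n \<sigma> u ! 0 = b \<and> permw n \<sigma> u ! 1 = b)"
      have tm: "f (permw n \<sigma> u) = (if C \<sigma> then sfun d r N / real d else 0)" if \<sigma>: "\<sigma> \<in> PS" for \<sigma>
      proof -
        let ?v = "permw n \<sigma> u"
        have sp: "\<sigma> permutes {..<n}" using \<sigma> by (simp add: PS_def)
        have vW: "?v \<in> words n d" using permw_words[OF sp uW] .
        have lv: "length ?v = n" by simp
        have mv: "mset ?v = mset u" using permw_pl[OF lu] mset_permute_list sp lu by simp
        have dW: "drop 2 ?v \<in> words (n-2) d" using dropW[OF vW] .
        have dec: "mset ?v = mset (drop 2 ?v) + {#?v!0, ?v!1#}" using mset_dec[of ?v] n lv by simp
        have mu: "mset u = mset N + {#b, b#}" by (simp add: u_def)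
        show ?thesis
        proof (cases "?v!0 = ?v!1")
          case False then show ?thesis using ff[OF vW] by (auto simp: C_def)
        next
          case True
          show ?thesis
          proof (cases "?v!0 = b")
            case True2: True
            have "mset (drop 2 ?v) = mset N" using dec mv mu True True2 by simp
            then have "sfun d r (drop 2 ?v) = sfun d r N" using ssym[OF dW less.prems] by simp
            then show ?thesis using ff[OF vW] True True2 by (simp add: C_def)
          next
            case False
            have "count (mset (drop 2 ?v)) b = count (mset N) b + 2"
            proof -
              have e: "mset (drop 2 ?v) + {#?v!0, ?v!0#} = mset N + {#b, b#}" using dec mv mu True by simp
              have "count (mset (drop 2 ?v) + {#?v!0, ?v!0#}) b = count (mset N + {#b, b#}) b"
                by (subst e) (rule refl)
              then show ?thesis using False by simp
            qed
            moreover have "count (mset (drop 2 ?v)) b \<le> n - 2"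
              using count_le_size[of "mset (drop 2 ?v)" b] dW by (simp add: words_def)
            ultimately have "n - 2 - count (mset (drop 2 ?v)) b < n - 2 - count (mset N) b" by simp
            then have "sfun d r (drop 2 ?v) = 0" using less.hyps dW by blast
            then show ?thesis using ff[OF vW] True False by (simp add: C_def)
          qed
        qed
      qed
      have fin: "finite PS" unfolding PS_def by (rule finite_permutations) simp
      have idC: "id \<in> {\<sigma>\<in>PS. C \<sigma>}"
        using permw_id[OF lu] by (simp add: PS_def C_def u_def)
      have cpos: "0 < card {\<sigma>\<in>PS. C \<sigma>}"
        using fin idC by (simp add: card_gt_0_iff) blast
      have "0 = (1 / fact n) * (\<Sum>\<sigma>\<in>PS. f (permw n \<sigma> u))" using xu[OF uW] xu0 by simp
      also have "\<dots> = (1 / fact n) * (\<Sum>\<sigma>\<in>PS. if C \<sigma> then sfun d r N / real d else 0)"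
        using tm by simp
      also have "\<dots> = (1 / fact n) * (\<Sum>\<sigma>\<in>{\<sigma>\<in>PS. C \<sigma>}. sfun d r N / real d)"
        by (subst sum.inter_filter[OF fin]) (rule refl)
      also have "\<dots> = (1 / fact n) * (real (card {\<sigma>\<in>PS. C \<sigma>}) * (sfun d r N / real d))"
        by simp
      finally show ?case using cpos d0 by simp
    qed
    have "x u = 0" for u
    proof (cases "u \<in> words n d")
      case True
      have "f (permw n \<sigma> u) = 0" if "\<sigma> \<in> PS" for \<sigma>
      proof -
        have "permw n \<sigma> u \<in> words n d" using permw_words that True by (simp add: PS_def)
        then show ?thesis using ff s0 dropW by simp
      qed
      then show ?thesis using xu[OF True] by simp
    next
      case False
      then show ?thesis using x by (simp add: tmul_def)
    qed
    then show "x \<in> {(\<lambda>_. 0)}" by auto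
  qed
qed

definition sgO :: "nat \<Rightarrow> nat \<Rightarrow> int" where
 "sgO i j = [[1, 1, 1, 1, 1, 1, 1, 1], [1, -1, 1, -1, 1, -1, -1, 1], [1, -1, -1, 1, 1, 1, -1, -1], [1, 1, -1, -1, 1, -1, 1, -1], [1, -1, -1, -1, -1, 1, 1, 1], [1, 1, -1, 1, -1, -1, -1, 1], [1, 1, 1, -1, -1, 1, -1, -1], [1, -1, 1, 1, -1, -1, 1, -1]] ! i ! j"
definition ixO :: "nat \<Rightarrow> nat \<Rightarrow> nat" where
 "ixO i j = [[0, 1, 2, 3, 4, 5, 6, 7], [1, 0, 3, 2, 5, 4, 7, 6], [2, 3, 0, 1, 6, 7, 4, 5], [3, 2, 1, 0, 7, 6, 5, 4], [4, 5, 6, 7, 0, 1, 2, 3], [5, 4, 7, 6, 1, 0, 3, 2], [6, 7, 4, 5, 2, 3, 0, 1], [7, 6, 5, 4, 3, 2, 1, 0]] ! i ! j"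
definition tabO :: "nat \<Rightarrow> nat \<Rightarrow> nat \<Rightarrow> int" where
 "tabO i j k = (if k = ixO i j then sgO i j else 0)"
definition sgH :: "nat \<Rightarrow> nat \<Rightarrow> int" where
 "sgH i j = [[1, 1, 1, 1], [1, -1, 1, -1], [1, -1, -1, 1], [1, 1, -1, -1]] ! i ! j"
definition tabH :: "nat \<Rightarrow> nat \<Rightarrow> nat \<Rightarrow> int" where
 "tabH i j k = (if k = ixO i j then sgH i j else 0)"

lemma less8_cases: "(i::nat) < 8 \<Longrightarrow> i = 0 \<or> i = 1 \<or> i = 2 \<or> i = 3 \<or> i = 4 \<or> i = 5 \<or> i = 6 \<or> i = 7"
  by auto

lemma less4_cases: "(i::nat) < 4 \<Longrightarrow> i = 0 \<or> i = 1 \<or> i = 2 \<or> i = 3"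
  by auto

lemma bmulO_tab: assumes "i < 8" "j < 8" shows "bmulO i j k = real_of_int (tabO i j k)"
proof -
  have "k < 8 \<or> k \<ge> 8" by auto
  then show ?thesis using less8_cases[OF assms(1)] less8_cases[OF assms(2)]
    apply (elim disjE)
    apply (auto simp: bmulO_def omul_def Let_def ofst_def osnd_def qmul_def qconj_def unitv_def tabO_def sgO_def ixO_def dest!: less8_cases)
    done
qed

lemma bmulH_tab: assumes "i < 4" "j < 4" shows "bmulH i j k = real_of_int (tabH i j k)"
proof -
  have "k < 4 \<or> k \<ge> 4" by auto
  then show ?thesis using less4_cases[OF assms(1)] less4_cases[OF assms(2)]
    apply (elim disjE)
    apply (auto simp: bmulH_def qmul_def unitv_def tabH_def sgH_def ixO_def dest!: less4_cases)
    done
qed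

definition chkO :: bool where
 "chkO = (list_all (\<lambda>a. list_all (\<lambda>b. list_all (\<lambda>p. list_all (\<lambda>q.
     sum_list (map (\<lambda>k. tabO a k p * tabO b k q + tabO b k p * tabO a k q) [0..<8])
     = (if a = b \<and> p = q then 2 else 0)) [0..<8]) [0..<8]) [0..<8]) [0..<8]
  \<and> list_all (\<lambda>a. list_all (\<lambda>p. tabO a 0 p = (if a = p then 1 else 0)) [0..<8]) [0..<8])"

lemma chkO: chkO by code_simp

definition chkH :: bool where
 "chkH = (list_all (\<lambda>a. list_all (\<lambda>b. list_all (\<lambda>p. list_all (\<lambda>q.
     sum_list (map (\<lambda>k. tabH a k p * tabH b k q + tabH b k p * tabH a k q) [0..<4])
     = (if a = b \<and> p = q then 2 else 0)) [0..<4]) [0..<4]) [0..<4]) [0..<4]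
  \<and> list_all (\<lambda>a. list_all (\<lambda>p. tabH a 0 p = (if a = p then 1 else 0)) [0..<4]) [0..<4])"

lemma chkH: chkH by code_simp

lemma upt_sum: "sum_list (map f [0..<m]) = (\<Sum>k<m. f k)"
  by (simp add: interv_sum_list_conv_sum_set_nat atLeast0LessThan)

lemma H_from_tab:
  fixes bm :: "nat \<Rightarrow> nat \<Rightarrow> nat \<Rightarrow> real" and tab :: "nat \<Rightarrow> nat \<Rightarrow> nat \<Rightarrow> int"
  assumes tb: "\<And>i j k. i < d \<Longrightarrow> j < d \<Longrightarrow> bm i j k = real_of_int (tab i j k)"
    and c: "list_all (\<lambda>a. list_all (\<lambda>b. list_all (\<lambda>p. list_all (\<lambda>q.
     sum_list (map (\<lambda>k. tab a k p * tab b k q + tab b k p * tab a k q) [0..<d])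
     = (if a = b \<and> p = q then 2 else 0)) [0..<d]) [0..<d]) [0..<d]) [0..<d]
     \<and> list_all (\<lambda>a. list_all (\<lambda>p. tab a 0 p = (if a = p then 1 else 0)) [0..<d]) [0..<d]"
    and d0: "0 < d"
  shows "\<forall>a<d. \<forall>p<d. bm a 0 p = (if a = p then 1 else (0::real))"
    and "\<forall>a<d. \<forall>c<d. \<forall>p<d. \<forall>q<d. (\<Sum>k<d. bm a k p * bm c k q) + (\<Sum>k<d. bm c k p * bm a k q) = (if a = c \<and> p = q then 2 else 0)"
proof -
  have c1: "\<forall>a<d. \<forall>b<d. \<forall>p<d. \<forall>q<d. (\<Sum>k<d. tab a k p * tab b k q + tab b k p * tab a k q) = (if a = b \<and> p = q then 2 else 0)"
    and c2: "\<forall>a<d. \<forall>p<d. tab a 0 p = (if a = p then 1 else 0)"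
    using c by (simp_all add: list_all_iff upt_sum)
  show "\<forall>a<d. \<forall>p<d. bm a 0 p = (if a = p then 1 else (0::real))"
    using c2 tb d0 by simp
  show "\<forall>a<d. \<forall>c<d. \<forall>p<d. \<forall>q<d. (\<Sum>k<d. bm a k p * bm c k q) + (\<Sum>k<d. bm c k p * bm a k q) = (if a = c \<and> p = q then 2 else 0)"
  proof (intro allI impI)
    fix a c p q assume a: "a < d" and cc: "c < d" and p: "p < d" and q: "q < d"
    have "(\<Sum>k<d. bm a k p * bm c k q) + (\<Sum>k<d. bm c k p * bm a k q)
        = (\<Sum>k<d. real_of_int (tab a k p * tab c k q + tab c k p * tab a k q))"
      using a cc by (simp add: sum.distrib[symmetric] tb)
    also have "\<dots> = real_of_int (\<Sum>k<d. tab a k p * tab c k q + tab c k p * tab a k q)"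
      by simp
    also have "\<dots> = (if a = c \<and> p = q then 2 else 0)"
      using c1 a cc p q by simp
    finally show "(\<Sum>k<d. bm a k p * bm c k q) + (\<Sum>k<d. bm c k p * bm a k q) = (if a = c \<and> p = q then 2 else 0)" .
  qed
qed

lemmas HO = H_from_tab[of 8 bmulO tabO, OF bmulO_tab chkO[unfolded chkO_def]]
lemmas HH = H_from_tab[of 4 bmulH tabH, OF bmulH_tab chkH[unfolded chkH_def]]

theorem lemma2p7:
  fixes n :: nat
  assumes "2 \<le> n"
  shows "Sym n 2 \<inter> {tmul bmulH n 4 r (delta n 4) | r. r \<in> Sym n 4} = {(\<lambda>_. 0)}
     \<and> Sym n 4 \<inter> {tmul bmulO n 8 r (delta n 8) | r. r \<in> Sym n 8} = {(\<lambda>_. 0)}"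
proof
  show "Sym n 2 \<inter> {tmul bmulH n 4 r (delta n 4) | r. r \<in> Sym n 4} = {(\<lambda>_. 0)}"
    by (rule main_gen[OF assms _ HH(1) HH(2)]) simp_all
  show "Sym n 4 \<inter> {tmul bmulO n 8 r (delta n 8) | r. r \<in> Sym n 8} = {(\<lambda>_. 0)}"
    by (rule main_gen[OF assms _ HO(1) HO(2)]) simp_all
qed

end
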